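(* (Provably in $\mathsf{Z}^-_{\mathrm{FTM}\omega}$.) For any set $X$, the finite closure $\mathrm{PC}(X)$ and the transitive closure $\mathrm{TC}(X)$ exist as sets.
   Context: $\mathsf{Z}^-_{\mathrm{FTM}\omega}$ is Zermelo set theory without Power Set and Choice (Extensionality, Pairing, Union, Infinity, Regularity, Separation) plus: (FC) every set $X$ has a superset $Y$ such that every finite $x\subseteq Y$ belongs to $Y$; (TS) every set has a transitive superset; (MC) every set binary relation $A$ that is well-founded and extensional admits a transitive set $X$ and a bijection $\eta$ from its field onto $X$ with $jAk\iff\eta(j)\in\eta(k)$; (Count) every set admits an injection into $\omega$. A set $Y$ is finite-subset closed if every finite $x\subseteq Y$ belongs to $Y$. $\mathrm{PC}(X)$ is the $\subseteq$-least finite-subset closed superset of $X$, and $\mathrm{TC}(X)$ is the $\subseteq$-least transitive superset of $X$. *)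

theory Defs
  imports Main
begin

text \<open>A model of set theory is a membership relation M on a type 'a (M x y means x is an
element of y). By Goedel completeness, "provable in the theory T" is rendered as
"true in every model of T".\<close>

datatype fm = FMem nat nat | FEq nat nat | FNeg fm | FConj fm fm | FEx nat fm

fun sat :: "('a \<Rightarrow> 'a \<Rightarrow> bool) \<Rightarrow> (nat \<Rightarrow> 'a) \<Rightarrow> fm \<Rightarrow> bool" where
  "sat M e (FMem i j) = M (e i) (e j)"
| "sat M e (FEq i j) = (e i = e j)"
| "sat M e (FNeg p) = (\<not> sat M e p)"
| "sat M e (FConj p q) = (sat M e p \<and> sat M e q)"
| "sat M e (FEx v p) = (\<exists>x. sat M (e(v := x)) p)"

definition sub :: "('a \<Rightarrow> 'a \<Rightarrow> bool) \<Rightarrow> 'a \<Rightarrow> 'a \<Rightarrow> bool" where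
  "sub M x y \<longleftrightarrow> (\<forall>z. M z x \<longrightarrow> M z y)"

definition is_empty :: "('a \<Rightarrow> 'a \<Rightarrow> bool) \<Rightarrow> 'a \<Rightarrow> bool" where
  "is_empty M x \<longleftrightarrow> (\<forall>z. \<not> M z x)"

definition transitive_set :: "('a \<Rightarrow> 'a \<Rightarrow> bool) \<Rightarrow> 'a \<Rightarrow> bool" where
  "transitive_set M y \<longleftrightarrow> (\<forall>z. M z y \<longrightarrow> sub M z y)"

definition is_pair :: "('a \<Rightarrow> 'a \<Rightarrow> bool) \<Rightarrow> 'a \<Rightarrow> 'a \<Rightarrow> 'a \<Rightarrow> bool" where
  "is_pair M p a b \<longleftrightarrow>
     (\<forall>z. M z p \<longleftrightarrow> ((\<forall>u. M u z \<longleftrightarrow> u = a) \<or> (\<forall>u. M u z \<longleftrightarrow> u = a \<or> u = b)))"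

definition is_succ :: "('a \<Rightarrow> 'a \<Rightarrow> bool) \<Rightarrow> 'a \<Rightarrow> 'a \<Rightarrow> bool" where
  "is_succ M x s \<longleftrightarrow> (\<forall>z. M z s \<longleftrightarrow> M z x \<or> z = x)"

definition ind_set :: "('a \<Rightarrow> 'a \<Rightarrow> bool) \<Rightarrow> 'a \<Rightarrow> bool" where
  "ind_set M y \<longleftrightarrow> (\<exists>e. is_empty M e \<and> M e y) \<and>
     (\<forall>x s. M x y \<longrightarrow> is_succ M x s \<longrightarrow> M s y)"

definition is_omega :: "('a \<Rightarrow> 'a \<Rightarrow> bool) \<Rightarrow> 'a \<Rightarrow> bool" where
  "is_omega M w \<longleftrightarrow> ind_set M w \<and> (\<forall>y. ind_set M y \<longrightarrow> sub M w y)"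

definition ap :: "('a \<Rightarrow> 'a \<Rightarrow> bool) \<Rightarrow> 'a \<Rightarrow> 'a \<Rightarrow> 'a \<Rightarrow> bool" where
  "ap M f a b \<longleftrightarrow> (\<exists>p. M p f \<and> is_pair M p a b)"

definition is_fun :: "('a \<Rightarrow> 'a \<Rightarrow> bool) \<Rightarrow> 'a \<Rightarrow> ('a \<Rightarrow> bool) \<Rightarrow> ('a \<Rightarrow> bool) \<Rightarrow> bool" where
  "is_fun M f D C \<longleftrightarrow>
     (\<forall>p. M p f \<longrightarrow> (\<exists>a b. is_pair M p a b)) \<and>
     (\<forall>a b b'. ap M f a b \<longrightarrow> ap M f a b' \<longrightarrow> b = b') \<and>
     (\<forall>a b. ap M f a b \<longrightarrow> D a \<and> C b) \<and>
     (\<forall>a. D a \<longrightarrow> (\<exists>b. ap M f a b))"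

definition is_inj :: "('a \<Rightarrow> 'a \<Rightarrow> bool) \<Rightarrow> 'a \<Rightarrow> ('a \<Rightarrow> bool) \<Rightarrow> ('a \<Rightarrow> bool) \<Rightarrow> bool" where
  "is_inj M f D C \<longleftrightarrow> is_fun M f D C \<and>
     (\<forall>a a' b. ap M f a b \<longrightarrow> ap M f a' b \<longrightarrow> a = a')"

definition is_bij :: "('a \<Rightarrow> 'a \<Rightarrow> bool) \<Rightarrow> 'a \<Rightarrow> ('a \<Rightarrow> bool) \<Rightarrow> ('a \<Rightarrow> bool) \<Rightarrow> bool" where
  "is_bij M f D C \<longleftrightarrow> is_inj M f D C \<and> (\<forall>b. C b \<longrightarrow> (\<exists>a. ap M f a b))"

definition fin :: "('a \<Rightarrow> 'a \<Rightarrow> bool) \<Rightarrow> 'a \<Rightarrow> bool" where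
  "fin M x \<longleftrightarrow> (\<exists>w n f. is_omega M w \<and> M n w \<and> is_bij M f (\<lambda>a. M a n) (\<lambda>b. M b x))"

definition fsc :: "('a \<Rightarrow> 'a \<Rightarrow> bool) \<Rightarrow> 'a \<Rightarrow> bool" where
  "fsc M y \<longleftrightarrow> (\<forall>x. fin M x \<longrightarrow> sub M x y \<longrightarrow> M x y)"

definition is_relation :: "('a \<Rightarrow> 'a \<Rightarrow> bool) \<Rightarrow> 'a \<Rightarrow> bool" where
  "is_relation M A \<longleftrightarrow> (\<forall>p. M p A \<longrightarrow> (\<exists>a b. is_pair M p a b))"

definition in_field :: "('a \<Rightarrow> 'a \<Rightarrow> bool) \<Rightarrow> 'a \<Rightarrow> 'a \<Rightarrow> bool" where
  "in_field M A j \<longleftrightarrow> (\<exists>k. ap M A j k \<or> ap M A k j)"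

definition rel_wf :: "('a \<Rightarrow> 'a \<Rightarrow> bool) \<Rightarrow> 'a \<Rightarrow> bool" where
  "rel_wf M A \<longleftrightarrow> (\<forall>s. (\<exists>x. M x s) \<longrightarrow> (\<forall>x. M x s \<longrightarrow> in_field M A x) \<longrightarrow>
       (\<exists>m. M m s \<and> (\<forall>j. M j s \<longrightarrow> \<not> ap M A j m)))"

definition rel_ext :: "('a \<Rightarrow> 'a \<Rightarrow> bool) \<Rightarrow> 'a \<Rightarrow> bool" where
  "rel_ext M A \<longleftrightarrow> (\<forall>j k. in_field M A j \<longrightarrow> in_field M A k \<longrightarrow>
       (\<forall>i. ap M A i j \<longleftrightarrow> ap M A i k) \<longrightarrow> j = k)"

definition Z_FTM_omega :: "('a \<Rightarrow> 'a \<Rightarrow> bool) \<Rightarrow> bool" where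
  "Z_FTM_omega M \<longleftrightarrow>
    \<comment> \<open>Extensionality\<close>
    (\<forall>x y. (\<forall>z. M z x \<longleftrightarrow> M z y) \<longrightarrow> x = y) \<and>
    \<comment> \<open>Pairing\<close>
    (\<forall>a b. \<exists>y. \<forall>z. M z y \<longleftrightarrow> z = a \<or> z = b) \<and>
    \<comment> \<open>Union\<close>
    (\<forall>x. \<exists>y. \<forall>z. M z y \<longleftrightarrow> (\<exists>u. M u x \<and> M z u)) \<and>
    \<comment> \<open>Infinity\<close>
    (\<exists>y. ind_set M y) \<and>
    \<comment> \<open>Regularity (Foundation)\<close>
    (\<forall>x. (\<exists>y. M y x) \<longrightarrow> (\<exists>y. M y x \<and> (\<forall>z. M z y \<longrightarrow> \<not> M z x))) \<and>
    \<comment> \<open>Separation schema, with parameters\<close>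
    (\<forall>\<phi> v e x. \<exists>y. \<forall>z. M z y \<longleftrightarrow> M z x \<and> sat M (e(v := z)) \<phi>) \<and>
    \<comment> \<open>FC\<close>
    (\<forall>X. \<exists>Y. sub M X Y \<and> fsc M Y) \<and>
    \<comment> \<open>TS\<close>
    (\<forall>X. \<exists>Y. sub M X Y \<and> transitive_set M Y) \<and>
    \<comment> \<open>MC (Mostowski collapse)\<close>
    (\<forall>A. is_relation M A \<longrightarrow> rel_wf M A \<longrightarrow> rel_ext M A \<longrightarrow>
       (\<exists>X \<eta>. transitive_set M X \<and> is_bij M \<eta> (in_field M A) (\<lambda>b. M b X) \<and>
          (\<forall>j k a b. ap M \<eta> j a \<longrightarrow> ap M \<eta> k b \<longrightarrow> (ap M A j k \<longleftrightarrow> M a b)))) \<and>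
    \<comment> \<open>Count\<close>
    (\<forall>X. \<exists>w f. is_omega M w \<and> is_inj M f (\<lambda>a. M a X) (\<lambda>b. M b w))"

definition is_PC :: "('a \<Rightarrow> 'a \<Rightarrow> bool) \<Rightarrow> 'a \<Rightarrow> 'a \<Rightarrow> bool" where
  "is_PC M X P \<longleftrightarrow> sub M X P \<and> fsc M P \<and> (\<forall>Y. sub M X Y \<longrightarrow> fsc M Y \<longrightarrow> sub M P Y)"

definition is_TC :: "('a \<Rightarrow> 'a \<Rightarrow> bool) \<Rightarrow> 'a \<Rightarrow> 'a \<Rightarrow> bool" where
  "is_TC M X T \<longleftrightarrow> sub M X T \<and> transitive_set M T \<and>
     (\<forall>Y. sub M X Y \<longrightarrow> transitive_set M Y \<longrightarrow> sub M T Y)"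

end

theory Submission
  imports Defs
begin

definition fall :: "nat \<Rightarrow> fm \<Rightarrow> fm" where "fall v p = FNeg (FEx v (FNeg p))"
definition fimp :: "fm \<Rightarrow> fm \<Rightarrow> fm" where "fimp p q = FNeg (FConj p (FNeg q))"
definition fdis :: "fm \<Rightarrow> fm \<Rightarrow> fm" where "fdis p q = FNeg (FConj (FNeg p) (FNeg q))"
definition fiff :: "fm \<Rightarrow> fm \<Rightarrow> fm" where "fiff p q = FConj (fimp p q) (fimp q p)"

lemma sat_conn[simp]:
  "sat M e (fall v p) = (\<forall>x. sat M (e(v:=x)) p)"
  "sat M e (fimp p q) = (sat M e p \<longrightarrow> sat M e q)"
  "sat M e (fdis p q) = (sat M e p \<or> sat M e q)"
  "sat M e (fiff p q) = (sat M e p \<longleftrightarrow> sat M e q)"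
  by (auto simp: fall_def fimp_def fdis_def fiff_def)

definition f_sub where "f_sub a b k = fall k (fimp (FMem k a) (FMem k b))"
lemma sat_f_sub[simp]: "a < k \<Longrightarrow> b < k \<Longrightarrow> sat M e (f_sub a b k) = sub M (e a) (e b)"
  by (simp add: f_sub_def sub_def)

definition f_empty where "f_empty a k = fall k (FNeg (FMem k a))"
lemma sat_f_empty[simp]: "a < k \<Longrightarrow> sat M e (f_empty a k) = is_empty M (e a)"
  by (simp add: f_empty_def is_empty_def)

definition f_succ where "f_succ x s k = fall k (fiff (FMem k s) (fdis (FMem k x) (FEq k x)))"
lemma sat_f_succ[simp]: "x < k \<Longrightarrow> s < k \<Longrightarrow> sat M e (f_succ x s k) = is_succ M (e x) (e s)"
  by (simp add: f_succ_def is_succ_def)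

definition f_ind where "f_ind y k = FConj (FEx k (FConj (f_empty k (k+1)) (FMem k y)))
   (fall k (fall (k+1) (fimp (FMem k y) (fimp (f_succ k (k+1) (k+2)) (FMem (k+1) y)))))"
lemma sat_f_ind[simp]: "y < k \<Longrightarrow> sat M e (f_ind y k) = ind_set M (e y)"
  by (simp add: f_ind_def ind_set_def)

definition f_omega where "f_omega w k = FConj (f_ind w k) (fall k (fimp (f_ind k (k+1)) (f_sub w k (k+1))))"
lemma sat_f_omega[simp]: "w < k \<Longrightarrow> sat M e (f_omega w k) = is_omega M (e w)"
  by (simp add: f_omega_def is_omega_def)

definition f_pair where "f_pair p a b k = fall k (fiff (FMem k p)
   (fdis (fall (k+1) (fiff (FMem (k+1) k) (FEq (k+1) a)))
         (fall (k+1) (fiff (FMem (k+1) k) (fdis (FEq (k+1) a) (FEq (k+1) b))))))"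
lemma sat_f_pair[simp]: "p < k \<Longrightarrow> a < k \<Longrightarrow> b < k \<Longrightarrow>
   sat M e (f_pair p a b k) = is_pair M (e p) (e a) (e b)"
  by (simp add: f_pair_def is_pair_def)

definition f_ap where "f_ap f a b k = FEx k (FConj (FMem k f) (f_pair k a b (k+1)))"
lemma sat_f_ap[simp]: "f < k \<Longrightarrow> a < k \<Longrightarrow> b < k \<Longrightarrow>
   sat M e (f_ap f a b k) = ap M (e f) (e a) (e b)"
  by (simp add: f_ap_def ap_def)

definition f_bij where "f_bij f n x k =
  FConj (fall k (fimp (FMem k f) (FEx (k+1) (FEx (k+2) (f_pair k (k+1) (k+2) (k+3))))))
  (FConj (fall k (fall (k+1) (fall (k+2) (fimp (f_ap f k (k+1) (k+3)) (fimp (f_ap f k (k+2) (k+3)) (FEq (k+1) (k+2)))))))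
  (FConj (fall k (fall (k+1) (fimp (f_ap f k (k+1) (k+2)) (FConj (FMem k n) (FMem (k+1) x)))))
  (FConj (fall k (fimp (FMem k n) (FEx (k+1) (f_ap f k (k+1) (k+2)))))
  (FConj (fall k (fall (k+1) (fall (k+2) (fimp (f_ap f k (k+2) (k+3)) (fimp (f_ap f (k+1) (k+2) (k+3)) (FEq k (k+1)))))))
   (fall k (fimp (FMem k x) (FEx (k+1) (f_ap f (k+1) k (k+2)))))))))"
lemma sat_f_bij[simp]: "f < k \<Longrightarrow> n < k \<Longrightarrow> x < k \<Longrightarrow>
   sat M e (f_bij f n x k) = is_bij M (e f) (\<lambda>a. M a (e n)) (\<lambda>b. M b (e x))"
  by (simp add: f_bij_def is_bij_def is_inj_def is_fun_def)

definition f_fin where "f_fin x k = FEx k (FEx (k+1) (FEx (k+2)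
   (FConj (f_omega k (k+3)) (FConj (FMem (k+1) k) (f_bij (k+2) (k+1) x (k+3))))))"
lemma sat_f_fin[simp]: "x < k \<Longrightarrow> sat M e (f_fin x k) = fin M (e x)"
  by (simp add: f_fin_def fin_def)

definition f_fsc where "f_fsc y k = fall k (fimp (f_fin k (k+1)) (fimp (f_sub k y (k+1)) (FMem k y)))"
lemma sat_f_fsc[simp]: "y < k \<Longrightarrow> sat M e (f_fsc y k) = fsc M (e y)"
  by (simp add: f_fsc_def fsc_def)

definition f_trans where "f_trans y k = fall k (fimp (FMem k y) (f_sub k y (k+1)))"
lemma sat_f_trans[simp]: "y < k \<Longrightarrow> sat M e (f_trans y k) = transitive_set M (e y)"
  by (simp add: f_trans_def transitive_set_def)

theorem lemma9p1:
  fixes M :: "'a \<Rightarrow> 'a \<Rightarrow> bool"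
  assumes "Z_FTM_omega M"
  shows "\<forall>X. (\<exists>P. is_PC M X P) \<and> (\<exists>T. is_TC M X T)"
proof
  fix X
  have sep: "\<And>\<phi> v e x. \<exists>y. \<forall>z. M z y \<longleftrightarrow> M z x \<and> sat M (e(v := z)) \<phi>"
    using assms unfolding Z_FTM_omega_def by blast
  have fc: "\<exists>Y. sub M X Y \<and> fsc M Y" and ts: "\<exists>Y. sub M X Y \<and> transitive_set M Y"
    using assms unfolding Z_FTM_omega_def by blast+
  have "\<exists>P. is_PC M X P"
  proof -
    obtain Y where Y: "sub M X Y" "fsc M Y" using fc by blast
    obtain P where P: "\<forall>z. M z P \<longleftrightarrow> M z Y \<and>
       sat M ((\<lambda>_. X)(0 := z)) (fall 2 (fimp (f_sub 1 2 3) (fimp (f_fsc 2 3) (FMem 0 2))))"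
      using sep by blast
    have P': "\<And>z. M z P \<longleftrightarrow> M z Y \<and> (\<forall>Y'. sub M X Y' \<longrightarrow> fsc M Y' \<longrightarrow> M z Y')"
      using P by simp
    show ?thesis unfolding is_PC_def
    proof (intro exI[of _ P] conjI allI impI)
      show "sub M X P" using Y P' unfolding sub_def by blast
      show "fsc M P" unfolding fsc_def
      proof (intro allI impI)
        fix x assume "fin M x" "sub M x P"
        then show "M x P" using Y P' unfolding fsc_def sub_def by metis
      qed
      fix Y' assume "sub M X Y'" "fsc M Y'"
      then show "sub M P Y'" using P' unfolding sub_def by blast
    qed
  qed
  moreover have "\<exists>T. is_TC M X T"
  proof -
    obtain Y where Y: "sub M X Y" "transitive_set M Y" using ts by blast
    obtain P where P: "\<forall>z. M z P \<longleftrightarrow> M z Y \<and>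
       sat M ((\<lambda>_. X)(0 := z)) (fall 2 (fimp (f_sub 1 2 3) (fimp (f_trans 2 3) (FMem 0 2))))"
      using sep by blast
    have P': "\<And>z. M z P \<longleftrightarrow> M z Y \<and> (\<forall>Y'. sub M X Y' \<longrightarrow> transitive_set M Y' \<longrightarrow> M z Y')"
      using P by simp
    show ?thesis unfolding is_TC_def
    proof (intro exI[of _ P] conjI allI impI)
      show "sub M X P" using Y P' unfolding sub_def by blast
      show "transitive_set M P" using Y P' unfolding transitive_set_def sub_def by metis
      fix Y' assume "sub M X Y'" "transitive_set M Y'"
      then show "sub M P Y'" using P' unfolding sub_def by blast
    qed
  qed
  ultimately show "(\<exists>P. is_PC M X P) \<and> (\<exists>T. is_TC M X T)" by blast
qed

end
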